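(* Let $q$ be a prime power, let $0 \le n_1 \le n$, and let ${\bf A} = ({\bf A}_1 \mid {\bf A}_2) \in \mathrm{GF}(q)^{a \times n}$ and ${\bf B} = ({\bf B}_1 \mid {\bf B}_2) \in \mathrm{GF}(q)^{b \times n}$, where ${\bf A}_1 \in \mathrm{GF}(q)^{a \times n_1}$ and ${\bf B}_1 \in \mathrm{GF}(q)^{b \times n_1}$. Then for $i = 1$ and $i=2$, $$d_{\mathrm{S}}(R({\bf A}_i), R({\bf B}_i)) \le d_{\mathrm{S}}(R({\bf A}), R({\bf B})) \quad\text{and}\quad d_{\mathrm{I}}(R({\bf A}_i), R({\bf B}_i)) \le d_{\mathrm{I}}(R({\bf A}), R({\bf B})).$$
   Context: For a matrix ${\bf M}$ over $\mathrm{GF}(q)$, $R({\bf M})$ denotes its row space. For subspaces $U,V$ of $\mathrm{GF}(q)^m$, the subspace distance is $d_{\mathrm{S}}(U,V) = \dim(U+V) - \dim(U\cap V) = 2\dim(U+V) - \dim U - \dim V$ and the injection distance is $d_{\mathrm{I}}(U,V) = \dim(U+V) - \min\{\dim U, \dim V\}$. *)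

theory Defs
  imports Complex_Main "HOL-Library.Function_Algebras"
begin

text \<open>Vectors over the field are functions nat => 'a; the ambient space GF(q)^m is
  the set of such functions vanishing outside {..<m}. A matrix is a function
  M :: nat => nat => 'a with M i j the (i,j) entry (indices from 0).\<close>

definition fscale :: "'a::field \<Rightarrow> (nat \<Rightarrow> 'a) \<Rightarrow> (nat \<Rightarrow> 'a)" where
  "fscale c v = (\<lambda>i. c * v i)"

lemma vector_space_fscale: "vector_space (fscale :: 'a::field \<Rightarrow> _)"
  unfolding vector_space_def module_def by (auto simp: fscale_def algebra_simps fun_eq_iff)

definition row_vec :: "(nat \<Rightarrow> nat \<Rightarrow> 'a::field) \<Rightarrow> nat \<Rightarrow> nat \<Rightarrow> (nat \<Rightarrow> 'a)" where
  "row_vec M m i = (\<lambda>j. if j < m then M i j else 0)"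

definition row_space :: "(nat \<Rightarrow> nat \<Rightarrow> 'a::field) \<Rightarrow> nat \<Rightarrow> nat \<Rightarrow> (nat \<Rightarrow> 'a) set" where
  "row_space M r m = module.span fscale {row_vec M m i | i. i < r}"

definition col_shift :: "(nat \<Rightarrow> nat \<Rightarrow> 'a) \<Rightarrow> nat \<Rightarrow> (nat \<Rightarrow> nat \<Rightarrow> 'a)" where
  "col_shift M k = (\<lambda>i j. M i (k + j))"

definition sdim :: "(nat \<Rightarrow> 'a::field) set \<Rightarrow> nat" where
  "sdim U = vector_space.dim fscale U"

definition ssum :: "(nat \<Rightarrow> 'a::field) set \<Rightarrow> (nat \<Rightarrow> 'a) set \<Rightarrow> (nat \<Rightarrow> 'a) set" where
  "ssum U V = module.span fscale (U \<union> V)"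

definition d_S :: "(nat \<Rightarrow> 'a::field) set \<Rightarrow> (nat \<Rightarrow> 'a) set \<Rightarrow> int" where
  "d_S U V = int (sdim (ssum U V)) - int (sdim (U \<inter> V))"

definition d_I :: "(nat \<Rightarrow> 'a::field) set \<Rightarrow> (nat \<Rightarrow> 'a) set \<Rightarrow> int" where
  "d_I U V = int (sdim (ssum U V)) - int (min (sdim U) (sdim V))"

end

theory Submission imports Defs "HOL-Library.FuncSet" begin

interpretation fs: vector_space "fscale :: 'a::field \<Rightarrow> (nat \<Rightarrow> 'a) \<Rightarrow> _"
  by (rule vector_space_fscale)

lemma fiber_count:
  assumes "finite X" "\<And>y. y \<in> f ` X \<Longrightarrow> card {x\<in>X. f x = y} = c"
  shows "card X = card (f ` X) * c"
proof -
  have "X = (\<Union>y\<in>f ` X. {x\<in>X. f x = y})" by auto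
  hence "card X = (\<Sum>y\<in>f ` X. card {x\<in>X. f x = y})"
  proof -
    have "card (\<Union>y\<in>f ` X. {x\<in>X. f x = y}) = (\<Sum>y\<in>f ` X. card {x\<in>X. f x = y})"
      by (rule card_UN_disjoint) (use assms(1) in auto)
    thus ?thesis using \<open>X = _\<close> by simp
  qed
  also have "\<dots> = card (f ` X) * c" using assms(2) by simp
  finally show ?thesis .
qed

lemma card_span_indep:
  fixes B :: "(nat \<Rightarrow> 'a::{field,finite}) set"
  assumes "finite B" "fs.independent B"
  shows "card (fs.span B) = card (UNIV::'a set) ^ card B"
proof -
  let ?g = "\<lambda>u. \<Sum>v\<in>B. fscale (u v) v"
  have sp: "fs.span B = ?g ` (B \<rightarrow>\<^sub>E UNIV)"
  proof -
    have "fs.span B = range ?g" using fs.span_finite[OF assms(1)] .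
    also have "\<dots> = ?g ` (B \<rightarrow>\<^sub>E UNIV)"
    proof (rule set_eqI, rule iffI)
      fix y assume "y \<in> range ?g"
      then obtain u where y: "y = ?g u" by auto
      have "y = ?g (restrict u B)" unfolding y by (intro sum.cong) auto
      moreover have "restrict u B \<in> B \<rightarrow>\<^sub>E UNIV" by auto
      ultimately show "y \<in> ?g ` (B \<rightarrow>\<^sub>E UNIV)" by blast
    qed auto
    finally show ?thesis .
  qed
  have inj: "inj_on ?g (B \<rightarrow>\<^sub>E UNIV)"
  proof (rule inj_onI)
    fix u w assume u: "u \<in> B \<rightarrow>\<^sub>E UNIV" and w: "w \<in> B \<rightarrow>\<^sub>E UNIV" and e: "?g u = ?g w"
    have "(\<Sum>v\<in>B. fscale (u v - w v) v) = (\<Sum>v\<in>B. fscale (u v) v - fscale (w v) v)"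
      by (simp add: fs.scale_left_diff_distrib)
    also have "\<dots> = ?g u - ?g w" by (simp add: sum_subtractf)
    finally have "(\<Sum>v\<in>B. fscale (u v - w v) v) = ?g u - ?g w" .
    hence z: "(\<Sum>v\<in>B. fscale (u v - w v) v) = 0" using e by simp
    show "u = w"
    proof
      fix x show "u x = w x"
      proof (cases "x \<in> B")
        case True
        have "u x - w x = 0"
          using fs.independentD[OF assms(2) assms(1) order_refl z True] by simp
        thus ?thesis by simp
      next
        case False thus ?thesis using u w by (auto simp: PiE_def extensional_def)
      qed
    qed
  qed
  have "card (fs.span B) = card (B \<rightarrow>\<^sub>E (UNIV::'a set))" using sp inj by (simp add: card_image)
  also have "\<dots> = card (UNIV::'a set) ^ card B" by (simp add: card_PiE assms(1))
  finally show ?thesis .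
qed

lemma card_subspace:
  fixes X W :: "(nat \<Rightarrow> 'a::{field,finite}) set"
  assumes "finite W" "fs.subspace X" "X \<subseteq> fs.span W"
  shows "finite X \<and> card X = card (UNIV::'a set) ^ sdim X"
proof -
  obtain B where B: "B \<subseteq> X" "fs.independent B" "X \<subseteq> fs.span B" "card B = fs.dim X"
    using fs.basis_exists[of X] by metis
  have fB: "finite B" using fs.independent_span_bound[OF assms(1) B(2)] B(1) assms(3) by blast
  have XB: "fs.span B = X" using fs.span_subspace[OF B(1) B(3) assms(2)] .
  have "card X = card (UNIV::'a set) ^ card B" using card_span_indep[OF fB B(2)] XB by simp
  moreover have "finite X"
    by (rule card_ge_0_finite) (simp add: \<open>card X = _\<close> card_gt_0_iff)
  ultimately show ?thesis using B(4) by (simp add: sdim_def)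
qed

lemma card_gt1: "1 < card (UNIV::'a::{field,finite} set)"
proof -
  have "card {0::'a, 1} \<le> card (UNIV::'a set)" by (rule card_mono) auto
  thus ?thesis by simp
qed

lemma pow_inj: "card (UNIV::'a::{field,finite} set) ^ a = card (UNIV::'a set) ^ b \<Longrightarrow> a = b"
  using card_gt1[where 'a='a] by (simp add: power_inject_exp)

lemma ssum_sub:
  fixes U V W :: "(nat \<Rightarrow> 'a::field) set"
  assumes "U \<subseteq> fs.span W" "V \<subseteq> fs.span W"
  shows "ssum U V \<subseteq> fs.span W" "fs.subspace (ssum U V)" "U \<subseteq> ssum U V" "V \<subseteq> ssum U V"
proof -
  show "ssum U V \<subseteq> fs.span W" unfolding ssum_def
    by (rule fs.span_minimal) (use assms in auto)
  show "fs.subspace (ssum U V)" "U \<subseteq> ssum U V" "V \<subseteq> ssum U V"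
    unfolding ssum_def using fs.span_superset[of "U \<union> V"] by auto
qed

lemma dim_formula:
  fixes U V W :: "(nat \<Rightarrow> 'a::{field,finite}) set"
  assumes W: "finite W" and sU: "fs.subspace U" and sV: "fs.subspace V"
    and UW: "U \<subseteq> fs.span W" and VW: "V \<subseteq> fs.span W"
  shows "sdim (ssum U V) + sdim (U \<inter> V) = sdim U + sdim V"
proof -
  let ?q = "card (UNIV::'a set)"
  let ?g = "\<lambda>(u::nat\<Rightarrow>'a, v). u + v"
  have cU: "finite U" "card U = ?q ^ sdim U" using card_subspace[OF W sU UW] by auto
  have cV: "finite V" "card V = ?q ^ sdim V" using card_subspace[OF W sV VW] by auto
  have cS: "card (ssum U V) = ?q ^ sdim (ssum U V)"
    using card_subspace[OF W ssum_sub(2)[OF UW VW] ssum_sub(1)[OF UW VW]] by auto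
  have cI: "card (U \<inter> V) = ?q ^ sdim (U \<inter> V)"
    using card_subspace[OF W fs.subspace_inter[OF sU sV]] UW by auto
  have img: "?g ` (U \<times> V) = ssum U V"
  proof -
    have spU: "fs.span U = U" by (rule fs.span_subspace[OF order_refl fs.span_superset sU])
    have spV: "fs.span V = V" by (rule fs.span_subspace[OF order_refl fs.span_superset sV])
    have "ssum U V = {x + y | x y. x \<in> U \<and> y \<in> V}"
      unfolding ssum_def fs.span_Un spU spV ..
    thus ?thesis by auto
  qed
  have fib: "card {x\<in>U \<times> V. ?g x = y} = card (U \<inter> V)" if y: "y \<in> ?g ` (U \<times> V)" for y
  proof -
    obtain u0 v0 where u0: "u0 \<in> U" and v0: "v0 \<in> V" and yy: "y = u0 + v0" using y by auto
    have "{x\<in>U \<times> V. ?g x = y} = (\<lambda>x. (u0 + x, v0 - x)) ` (U \<inter> V)"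
    proof (rule set_eqI, rule iffI)
      fix p assume p: "p \<in> {x\<in>U \<times> V. ?g x = y}"
      then obtain u v where pu: "p = (u, v)" "u \<in> U" "v \<in> V" "u + v = u0 + v0" using yy by auto
      have "u - u0 \<in> U" using fs.subspace_diff[OF sU pu(2) u0] .
      moreover have "u - u0 = v0 - v" using pu(4) by (simp add: algebra_simps)
      moreover have "v0 - v \<in> V" using fs.subspace_diff[OF sV v0 pu(3)] .
      ultimately have m: "u - u0 \<in> U \<inter> V" by simp
      have "p = (u0 + (u - u0), v0 - (u - u0))" using pu(1) \<open>u - u0 = v0 - v\<close> by (simp add: algebra_simps)
      thus "p \<in> (\<lambda>x. (u0 + x, v0 - x)) ` (U \<inter> V)" using m by (rule image_eqI)
    next
      fix p assume "p \<in> (\<lambda>x. (u0 + x, v0 - x)) ` (U \<inter> V)"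
      then obtain x where x: "x \<in> U" "x \<in> V" "p = (u0 + x, v0 - x)" by auto
      show "p \<in> {x\<in>U \<times> V. ?g x = y}"
        using x yy fs.subspace_add[OF sU u0 x(1)] fs.subspace_diff[OF sV v0 x(2)] by auto
    qed
    moreover have "inj_on (\<lambda>x. (u0 + x, v0 - x)) (U \<inter> V)" by (auto intro: inj_onI)
    ultimately show ?thesis by (simp add: card_image)
  qed
  have "card (U \<times> V) = card (?g ` (U \<times> V)) * card (U \<inter> V)"
    by (rule fiber_count) (use cU cV fib in auto)
  hence "card U * card V = card (ssum U V) * card (U \<inter> V)"
    by (simp add: img card_cartesian_product)
  hence "?q ^ (sdim U + sdim V) = ?q ^ (sdim (ssum U V) + sdim (U \<inter> V))"
    by (simp add: cU cV cS cI power_add)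
  thus ?thesis using pow_inj by metis
qed

lemma dim_mono:
  fixes X Y W :: "(nat \<Rightarrow> 'a::{field,finite}) set"
  assumes W: "finite W" and "fs.subspace X" "fs.subspace Y" "X \<subseteq> Y" "Y \<subseteq> fs.span W"
  shows "sdim X \<le> sdim Y"
proof -
  let ?q = "card (UNIV::'a set)"
  have X: "card X = ?q ^ sdim X" using card_subspace[OF W assms(2)] assms by auto
  have Y: "finite Y" "card Y = ?q ^ sdim Y" using card_subspace[OF W assms(3)] assms by auto
  have "?q ^ sdim X \<le> ?q ^ sdim Y" using card_mono[OF Y(1) assms(4)] X Y by simp
  thus ?thesis using card_gt1[where 'a='a] power_le_imp_le_exp by blast
qed

lemma rank_nullity:
  fixes X W :: "(nat \<Rightarrow> 'a::{field,finite}) set"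
  assumes f: "module_hom fscale fscale f" and W: "finite W" and sX: "fs.subspace X"
    and XW: "X \<subseteq> fs.span W"
  shows "sdim X = sdim (f ` X) + sdim (X \<inter> {x. f x = 0})"
proof -
  interpret f: module_hom fscale fscale f by (rule f)
  let ?q = "card (UNIV::'a set)"
  let ?K = "X \<inter> {x. f x = 0}"
  have cX: "finite X" "card X = ?q ^ sdim X" using card_subspace[OF W sX XW] by auto
  have fXW: "f ` X \<subseteq> fs.span (f ` W)" using XW f.span_image by auto
  have cF: "card (f ` X) = ?q ^ sdim (f ` X)"
    using card_subspace[OF finite_imageI[OF W] f.subspace_image[OF sX] fXW] by auto
  have cK: "card ?K = ?q ^ sdim ?K"
    using card_subspace[OF W fs.subspace_inter[OF sX f.subspace_kernel]] XW by auto
  have fib: "card {x\<in>X. f x = y} = card ?K" if y: "y \<in> f ` X" for y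
  proof -
    obtain w0 where w0: "w0 \<in> X" "y = f w0" using y by auto
    have "{x\<in>X. f x = y} = (\<lambda>k. w0 + k) ` ?K"
    proof (rule set_eqI, rule iffI)
      fix x assume x: "x \<in> {x\<in>X. f x = y}"
      have "x - w0 \<in> ?K" using x w0 fs.subspace_diff[OF sX] by (auto simp: f.diff)
      thus "x \<in> (\<lambda>k. w0 + k) ` ?K" by (intro image_eqI[where x="x - w0"]) auto
    next
      fix x assume "x \<in> (\<lambda>k. w0 + k) ` ?K"
      then obtain k where "k \<in> X" "f k = 0" "x = w0 + k" by auto
      thus "x \<in> {x\<in>X. f x = y}" using w0 fs.subspace_add[OF sX] by (auto simp: f.add)
    qed
    moreover have "inj_on (\<lambda>k. w0 + k) ?K" by (auto intro: inj_onI)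
    ultimately show ?thesis by (simp add: card_image)
  qed
  have "card X = card (f ` X) * card ?K" by (rule fiber_count) (use cX fib in auto)
  hence "?q ^ sdim X = ?q ^ (sdim (f ` X) + sdim ?K)" by (simp add: cX cF cK power_add)
  thus ?thesis using pow_inj by metis
qed

lemma dist_image:
  fixes U V W :: "(nat \<Rightarrow> 'a::{field,finite}) set"
  assumes f: "module_hom fscale fscale f" and W: "finite W" and sU: "fs.subspace U" and sV: "fs.subspace V"
    and UW: "U \<subseteq> fs.span W" and VW: "V \<subseteq> fs.span W"
  shows "d_S (f ` U) (f ` V) \<le> d_S U V \<and> d_I (f ` U) (f ` V) \<le> d_I U V"
proof -
  interpret f: module_hom fscale fscale f by (rule f)
  define S where "S = ssum U V"
  define K where "K = {x. f x = 0}"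
  have SW: "S \<subseteq> fs.span W" and sS: "fs.subspace S" and US: "U \<subseteq> S" and VS: "V \<subseteq> S"
    using ssum_sub[OF UW VW] unfolding S_def by auto
  have sK: "fs.subspace K" unfolding K_def by (rule f.subspace_kernel)
  have fS: "ssum (f ` U) (f ` V) = f ` S"
    unfolding ssum_def S_def image_Un[symmetric] f.span_image ..
  have fUW: "f ` U \<subseteq> fs.span (f ` W)" and fVW: "f ` V \<subseteq> fs.span (f ` W)"
    using UW VW f.span_image by auto
  have fW: "finite (f ` W)" using W by simp
  have rU: "sdim U = sdim (f ` U) + sdim (U \<inter> K)" unfolding K_def by (rule rank_nullity[OF f W sU UW])
  have rV: "sdim V = sdim (f ` V) + sdim (V \<inter> K)" unfolding K_def by (rule rank_nullity[OF f W sV VW])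
  have rS: "sdim S = sdim (f ` S) + sdim (S \<inter> K)" unfolding K_def by (rule rank_nullity[OF f W sS SW])
  have d1: "sdim S + sdim (U \<inter> V) = sdim U + sdim V"
    unfolding S_def by (rule dim_formula[OF W sU sV UW VW])
  have d2: "sdim (f ` S) + sdim (f ` U \<inter> f ` V) = sdim (f ` U) + sdim (f ` V)"
    unfolding fS[symmetric]
    by (rule dim_formula[OF fW f.subspace_image[OF sU] f.subspace_image[OF sV] fUW fVW])
  have SKW: "S \<inter> K \<subseteq> fs.span W" using SW by auto
  have mU: "sdim (U \<inter> K) \<le> sdim (S \<inter> K)"
    by (rule dim_mono[OF W fs.subspace_inter[OF sU sK] fs.subspace_inter[OF sS sK] _ SKW]) (use US in auto)
  have mV: "sdim (V \<inter> K) \<le> sdim (S \<inter> K)"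
    by (rule dim_mono[OF W fs.subspace_inter[OF sV sK] fs.subspace_inter[OF sS sK] _ SKW]) (use VS in auto)
  show ?thesis
    unfolding d_S_def d_I_def fS S_def[symmetric]
    using rU rV rS d1 d2 mU mV by (simp add: min_def)
qed

lemma fscale_hom:
  assumes "\<And>x y. f (x + y) = f x + f y" "\<And>c x. f (fscale c x) = fscale c (f x)"
  shows "module_hom fscale fscale (f :: (nat \<Rightarrow> 'a::field) \<Rightarrow> (nat \<Rightarrow> 'a))"
  unfolding module_hom_iff_linear Vector_Spaces.linear_iff using assms vector_space_fscale[where 'a='a] by simp

lemma rs_image:
  assumes f: "module_hom fscale fscale f"
    and r: "\<And>i. row_vec A' m' i = f (row_vec A m i)"
  shows "row_space A' a m' = f ` row_space (A :: nat \<Rightarrow> nat \<Rightarrow> 'a::field) a m"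
proof -
  interpret f: module_hom fscale fscale f by (rule f)
  have "{row_vec A' m' i | i. i < a} = f ` {row_vec A m i | i. i < a}" using r by auto
  thus ?thesis unfolding row_space_def by (simp add: f.span_image)
qed

lemma rs_basic:
  "fs.subspace (row_space A a m) \<and> row_space A a m \<subseteq> fs.span ((row_vec A m ` {..<a}) \<union> (row_vec B m ` {..<b}))"
proof -
  have e: "{row_vec A m i | i. i < a} = row_vec A m ` {..<a}" by auto
  show ?thesis unfolding row_space_def e
    by (auto intro: fs.span_mono[THEN subsetD])
qed

lemma rs_basic2:
  "fs.subspace (row_space B b m) \<and> row_space B b m \<subseteq> fs.span ((row_vec A m ` {..<a}) \<union> (row_vec B m ` {..<b}))"
proof -
  have e: "{row_vec B m i | i. i < b} = row_vec B m ` {..<b}" by auto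
  show ?thesis unfolding row_space_def e
    by (auto intro: fs.span_mono[THEN subsetD])
qed

theorem lemma1:
  fixes A B :: "nat \<Rightarrow> nat \<Rightarrow> 'a::{field,finite}"
    and a b n n1 :: nat
  assumes "n1 \<le> n"
  shows "d_S (row_space A a n1) (row_space B b n1) \<le> d_S (row_space A a n) (row_space B b n)
       \<and> d_I (row_space A a n1) (row_space B b n1) \<le> d_I (row_space A a n) (row_space B b n)
       \<and> d_S (row_space (col_shift A n1) a (n - n1)) (row_space (col_shift B n1) b (n - n1))
           \<le> d_S (row_space A a n) (row_space B b n)
       \<and> d_I (row_space (col_shift A n1) a (n - n1)) (row_space (col_shift B n1) b (n - n1))
           \<le> d_I (row_space A a n) (row_space B b n)"
proof -
  define W where "W = (row_vec A n ` {..<a}) \<union> (row_vec B n ` {..<b})"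
  have W: "finite W" unfolding W_def by simp
  have U: "fs.subspace (row_space A a n)" "row_space A a n \<subseteq> fs.span W"
    using rs_basic[of A a n B b] unfolding W_def by auto
  have V: "fs.subspace (row_space B b n)" "row_space B b n \<subseteq> fs.span W"
    using rs_basic2[of B b n A a] unfolding W_def by auto
  define p1 :: "(nat \<Rightarrow> 'a) \<Rightarrow> (nat \<Rightarrow> 'a)" where "p1 = (\<lambda>v j. if j < n1 then v j else 0)"
  define p2 :: "(nat \<Rightarrow> 'a) \<Rightarrow> (nat \<Rightarrow> 'a)" where "p2 = (\<lambda>v j. if j < n - n1 then v (n1 + j) else 0)"
  have h1: "module_hom fscale fscale p1"
    by (rule fscale_hom) (auto simp: p1_def fscale_def fun_eq_iff)
  have h2: "module_hom fscale fscale p2"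
    by (rule fscale_hom) (auto simp: p2_def fscale_def fun_eq_iff)
  have eA1: "row_space A a n1 = p1 ` row_space A a n"
    by (rule rs_image[OF h1]) (use assms in \<open>auto simp: row_vec_def p1_def fun_eq_iff\<close>)
  have eB1: "row_space B b n1 = p1 ` row_space B b n"
    by (rule rs_image[OF h1]) (use assms in \<open>auto simp: row_vec_def p1_def fun_eq_iff\<close>)
  have eA2: "row_space (col_shift A n1) a (n - n1) = p2 ` row_space A a n"
    by (rule rs_image[OF h2]) (use assms in \<open>auto simp: row_vec_def p2_def col_shift_def fun_eq_iff\<close>)
  have eB2: "row_space (col_shift B n1) b (n - n1) = p2 ` row_space B b n"
    by (rule rs_image[OF h2]) (use assms in \<open>auto simp: row_vec_def p2_def col_shift_def fun_eq_iff\<close>)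
  show ?thesis
    unfolding eA1 eB1 eA2 eB2
    using dist_image[OF h1 W U(1) V(1) U(2) V(2)] dist_image[OF h2 W U(1) V(1) U(2) V(2)] by blast
qed

end
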